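(* Let $\mathbb G$ be a Carnot group, $j\in\{1,\dots,n_1\}$, and $f\in L_1(\mathbb G)$. Then (1) for $\mathcal H^{\nu-1}$-a.e. $p\in\Pi_j$ the function $t\mapsto f(p\exp(tX_j))$ is integrable on $\mathbb R$; (2) for a.e. $t\in\mathbb R$ the function $p\mapsto f(p\exp(tX_j))$ is $\mathcal H^{\nu-1}$-integrable on $\Pi_j$; (3) \[ \int_{\Pi_j}d\mathcal H^{\nu-1}(p)\int_{\mathbb R}f(p\exp(tX_j))\,dt=\int_{\mathbb R}dt\int_{\Pi_j}f(p\exp(tX_j))\,d\mathcal H^{\nu-1}(p)=\frac{\Theta_{\Pi_j}}{\Theta_{\mathbb G}}\int_{\mathbb G}f(x)\,d\mathcal H^\nu(x). \]
   Context: $\mathbb{G}$ is a Carnot group: a connected simply connected nilpotent Lie group whose Lie algebra $\mathfrak{g}$ of left-invariant vector fields splits as $\mathfrak{g}=V_1\oplus\dots\oplus V_m$ with $[V_1,V_k]=V_{k+1}$ ($V_{m+1}=\{0\}$); $n_k=\dim V_k$, $N=\dim\mathfrak g$. Fix a basis $X_1,\dots,X_N$ ordered by degree with each $V_k$ spanned by a subcollection, $\sigma_i=k$ if $X_i\in V_k$. Points are identified with canonical coordinates $(x_1,\dots,x_N)=\exp(\sum x_iX_i)(e)$; $\nu=\sum_i\sigma_i$. $\rho$ is the Carnot--Carath\'eodory distance determined by a scalar product on $V_1$; $\mathcal H^s$ denotes the spherical Hausdorff measure w.r.t. $\rho$ ($\mathcal H^s=\sup_\varepsilon\beta_s\inf\{\sum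 r_k^s: \text{covers by balls of radius } r_k\le\varepsilon\}$, normalizing constants $\beta_s>0$). $\mathcal H^\nu=\Theta_{\mathbb G}\mathcal L^N$ with $\mathcal L^N$ Lebesgue measure in coordinates, and $L_1(\mathbb G)$ refers to this measure. $\Pi_j=\{x: x_j=0\}$ for $j\le n_1$, and $\mathcal H^{\nu-1}=\Theta_{\Pi_j}\mathcal L^{N-1}$ on $\Pi_j$, with $\mathcal L^{N-1}$ Lebesgue measure on $\Pi_j$ in coordinates and $\Theta_{\Pi_j}>0$ a constant. *)

theory Defs
  imports "HOL-Analysis.Analysis"
begin

text \<open>A Carnot group is modelled in canonical (exponential) coordinates of the first
kind: the Lie algebra is R^N with basis e_0..e_(N-1) (0-based indices), bracket given by
structure constants c, degrees sigma, step m; the group law is the (finite, by nilpotency)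
Baker-Campbell-Hausdorff-Dynkin product. Points are extensional functions on {..<N}.\<close>

type_synonym vec = "nat \<Rightarrow> real"

definition lie_br :: "nat \<Rightarrow> (nat \<Rightarrow> nat \<Rightarrow> nat \<Rightarrow> real) \<Rightarrow> vec \<Rightarrow> vec \<Rightarrow> vec" where
  "lie_br N c x y = restrict (\<lambda>l. \<Sum>i<N. \<Sum>k<N. x i * y k * c i k l) {..<N}"

definition basis_vec :: "nat \<Rightarrow> nat \<Rightarrow> vec" where
  "basis_vec N i = restrict (\<lambda>l. if l = i then 1 else 0) {..<N}"

text \<open>Stratified nilpotent Lie algebra g = V_1 + ... + V_m, V_k spanned by the basis
vectors of degree k, basis ordered by degree, [V_1,V_k] = V_(k+1), V_(m+1) = 0.\<close>

definition carnot_algebra ::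
  "nat \<Rightarrow> nat \<Rightarrow> (nat \<Rightarrow> nat) \<Rightarrow> (nat \<Rightarrow> nat \<Rightarrow> nat \<Rightarrow> real) \<Rightarrow> bool" where
  "carnot_algebra N m \<sigma> c \<longleftrightarrow>
     1 \<le> m \<and>
     (\<forall>i<N. 1 \<le> \<sigma> i \<and> \<sigma> i \<le> m) \<and>
     (\<forall>i<N. \<forall>k<N. i \<le> k \<longrightarrow> \<sigma> i \<le> \<sigma> k) \<and>
     (\<forall>i<N. \<forall>k<N. \<forall>l<N. c i k l = - c k i l) \<and>
     (\<forall>i<N. \<forall>k<N. \<forall>r<N. \<forall>l<N.
        (\<Sum>s<N. c k r s * c i s l + c r i s * c k s l + c i k s * c r s l) = 0) \<and>
     (\<forall>k\<in>{1..m}. \<forall>i<N. \<forall>r<N. \<forall>l<N.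
        \<sigma> i = 1 \<and> \<sigma> r = k \<and> c i r l \<noteq> 0 \<longrightarrow> \<sigma> l = k + 1) \<and>
     (\<forall>k\<in>{1..m}. \<forall>l<N. \<sigma> l = k + 1 \<longrightarrow>
        (\<exists>a :: nat \<Rightarrow> nat \<Rightarrow> real. basis_vec N l =
            restrict (\<lambda>q. \<Sum>i<N. \<Sum>r<N.
               if \<sigma> i = 1 \<and> \<sigma> r = k
               then a i r * lie_br N c (basis_vec N i) (basis_vec N r) q else 0) {..<N}))"

text \<open>Right-nested bracket of a word in the letters X (True) and Y (False).\<close>

fun nest :: "nat \<Rightarrow> (nat \<Rightarrow> nat \<Rightarrow> nat \<Rightarrow> real) \<Rightarrow> vec \<Rightarrow> vec \<Rightarrow> bool list \<Rightarrow> vec" where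
  "nest N c x y [] = (\<lambda>_. 0)"
| "nest N c x y [b] = (if b then x else y)"
| "nest N c x y (b # w) = lie_br N c (if b then x else y) (nest N c x y w)"

definition dynkin_word :: "(nat \<times> nat) list \<Rightarrow> bool list" where
  "dynkin_word ps = concat (map (\<lambda>(r, s). replicate r True @ replicate s False) ps)"

definition dynkin_seqs :: "nat \<Rightarrow> nat \<Rightarrow> (nat \<times> nat) list set" where
  "dynkin_seqs m n = {ps. length ps = n \<and> (\<forall>(r, s)\<in>set ps. 0 < r + s)
                         \<and> sum_list (map (\<lambda>(r, s). r + s) ps) \<le> m}"

definition dynkin_coef :: "(nat \<times> nat) list \<Rightarrow> real" where
  "dynkin_coef ps = (-1) ^ (length ps - 1) / real (length ps)
      / (real (sum_list (map (\<lambda>(r, s). r + s) ps))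
         * prod_list (map (\<lambda>(r, s). fact r * fact s) ps))"

text \<open>Group law in exponential coordinates: log(exp x exp y) by Dynkin's formula,
truncated at bracket length m (longer brackets vanish in a step-m algebra).\<close>

definition gmul :: "nat \<Rightarrow> nat \<Rightarrow> (nat \<Rightarrow> nat \<Rightarrow> nat \<Rightarrow> real) \<Rightarrow> vec \<Rightarrow> vec \<Rightarrow> vec" where
  "gmul N m c x y = restrict (\<lambda>l. \<Sum>n\<in>{1..m}. \<Sum>ps\<in>dynkin_seqs m n.
       dynkin_coef ps * nest N c x y (dynkin_word ps) l) {..<N}"

text \<open>exp(t X_j) in canonical coordinates.\<close>

definition exp_coord :: "nat \<Rightarrow> nat \<Rightarrow> real \<Rightarrow> vec" where
  "exp_coord N j t = restrict (\<lambda>i. if i = j then t else 0) {..<N}"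

definition lebN :: "nat \<Rightarrow> vec measure" where
  "lebN N = completion (PiM {..<N} (\<lambda>_. lborel))"

definition Pi_plane :: "nat \<Rightarrow> nat \<Rightarrow> vec set" where
  "Pi_plane N j = {x \<in> space (PiM {..<N} (\<lambda>_. lborel)). x j = 0}"

definition lebPlane :: "nat \<Rightarrow> nat \<Rightarrow> vec measure" where
  "lebPlane N j = completion (distr (PiM ({..<N} - {j}) (\<lambda>_. lborel))
      (restrict_space (PiM {..<N} (\<lambda>_. lborel)) (Pi_plane N j)) (\<lambda>p. p(j := 0)))"

text \<open>H^nu = Theta_G L^N and H^(nu-1) = Theta_Pi L^(N-1) on Pi_j.\<close>

definition H_G :: "real \<Rightarrow> nat \<Rightarrow> vec measure" where
  "H_G \<Theta> N = density (lebN N) (\<lambda>_. ennreal \<Theta>)"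

definition H_Pi :: "real \<Rightarrow> nat \<Rightarrow> nat \<Rightarrow> vec measure" where
  "H_Pi \<Theta> N j = density (lebPlane N j) (\<lambda>_. ennreal \<Theta>)"

end

theory Submission
  imports Defs
begin

lemma basis_vec_apply: "basis_vec N i q = (if q < N then (if q = i then 1 else 0) else undefined)"
  by (simp add: basis_vec_def)
lemma lie_br_apply: "lie_br N c x y l = (if l < N then (\<Sum>i<N. \<Sum>k<N. x i * y k * c i k l) else undefined)"
  by (simp add: lie_br_def)
lemma lie_br_basis:
  assumes "i < N" "r < N" "q < N"
  shows "lie_br N c (basis_vec N i) (basis_vec N r) q = c i r q"
proof -
  have "lie_br N c (basis_vec N i) (basis_vec N r) q = (\<Sum>i'<N. basis_vec N i i' * (\<Sum>k<N. basis_vec N r k * c i' k q))"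
    using assms by (simp add: lie_br_apply mult.assoc sum_distrib_left)
  also have "\<dots> = c i r q"
    using assms by (simp add: basis_vec_apply if_distrib[of "\<lambda>x. x * _"] cong: if_cong)
  finally show ?thesis .
qed
lemma ca_facts:
  assumes "carnot_algebra N m \<sigma> c"
  shows ca_m: "1 \<le> m" and ca_sig0: "\<forall>i<N. 1 \<le> \<sigma> i \<and> \<sigma> i \<le> m"
   and ca_mono0: "\<forall>i<N. \<forall>k<N. i \<le> k \<longrightarrow> \<sigma> i \<le> \<sigma> k"
   and ca_anti0: "\<forall>i<N. \<forall>k<N. \<forall>l<N. c i k l = - c k i l"
   and ca_jac0: "\<forall>i<N. \<forall>k<N. \<forall>r<N. \<forall>l<N.
        (\<Sum>s<N. c k r s * c i s l + c r i s * c k s l + c i k s * c r s l) = 0"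
   and ca_br0: "\<forall>k\<in>{1..m}. \<forall>i<N. \<forall>r<N. \<forall>l<N.
        \<sigma> i = 1 \<and> \<sigma> r = k \<and> c i r l \<noteq> 0 \<longrightarrow> \<sigma> l = k + 1"
   and ca_gen0: "\<forall>k\<in>{1..m}. \<forall>l<N. \<sigma> l = k + 1 \<longrightarrow>
        (\<exists>a :: nat \<Rightarrow> nat \<Rightarrow> real. basis_vec N l =
            restrict (\<lambda>q. \<Sum>i<N. \<Sum>r<N.
               if \<sigma> i = 1 \<and> \<sigma> r = k
               then a i r * lie_br N c (basis_vec N i) (basis_vec N r) q else 0) {..<N})"
proof -
  note A = assms[unfolded carnot_algebra_def]
  show "1 \<le> m" using A[THEN conjunct1] .
  show "\<forall>i<N. 1 \<le> \<sigma> i \<and> \<sigma> i \<le> m" using A[THEN conjunct2, THEN conjunct1] .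
  show "\<forall>i<N. \<forall>k<N. i \<le> k \<longrightarrow> \<sigma> i \<le> \<sigma> k" using A[THEN conjunct2, THEN conjunct2, THEN conjunct1] .
  show "\<forall>i<N. \<forall>k<N. \<forall>l<N. c i k l = - c k i l" using A[THEN conjunct2, THEN conjunct2, THEN conjunct2, THEN conjunct1] .
  show "\<forall>i<N. \<forall>k<N. \<forall>r<N. \<forall>l<N.
        (\<Sum>s<N. c k r s * c i s l + c r i s * c k s l + c i k s * c r s l) = 0"
    using A[THEN conjunct2, THEN conjunct2, THEN conjunct2, THEN conjunct2, THEN conjunct1] .
  show "\<forall>k\<in>{1..m}. \<forall>i<N. \<forall>r<N. \<forall>l<N.
        \<sigma> i = 1 \<and> \<sigma> r = k \<and> c i r l \<noteq> 0 \<longrightarrow> \<sigma> l = k + 1"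
    using A[THEN conjunct2, THEN conjunct2, THEN conjunct2, THEN conjunct2, THEN conjunct2, THEN conjunct1] .
  show "\<forall>k\<in>{1..m}. \<forall>l<N. \<sigma> l = k + 1 \<longrightarrow>
        (\<exists>a :: nat \<Rightarrow> nat \<Rightarrow> real. basis_vec N l =
            restrict (\<lambda>q. \<Sum>i<N. \<Sum>r<N.
               if \<sigma> i = 1 \<and> \<sigma> r = k
               then a i r * lie_br N c (basis_vec N i) (basis_vec N r) q else 0) {..<N})"
    using A[THEN conjunct2, THEN conjunct2, THEN conjunct2, THEN conjunct2, THEN conjunct2, THEN conjunct2] .
qed

lemmas ca_sig = ca_sig0[rule_format] and ca_mono = ca_mono0[rule_format] and ca_anti = ca_anti0[rule_format]
  and ca_jac = ca_jac0[rule_format] and ca_br = ca_br0[rule_format] and ca_gen = ca_gen0[rule_format]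

lemma grading_base:
  assumes ca: "carnot_algebra N m \<sigma> c" and "i < N" "k < N" "l < N" "\<sigma> i = 1" "c i k l \<noteq> 0"
  shows "\<sigma> l = \<sigma> i + \<sigma> k"
proof -
  have "\<sigma> k \<in> {1..m}" using ca_sig[OF ca] assms by auto
  from ca_br[OF ca this assms(2,3,4)] assms(5,6) show ?thesis using assms by simp
qed

lemma grading:
  assumes ca: "carnot_algebra N m \<sigma> c"
  shows "i < N \<Longrightarrow> k < N \<Longrightarrow> l < N \<Longrightarrow> c i k l \<noteq> 0 \<Longrightarrow> \<sigma> l = \<sigma> i + \<sigma> k"
proof (induction "\<sigma> i" arbitrary: i k l rule: less_induct)
  case less
  show ?case
  proof (cases "\<sigma> i = 1")
    case True then show ?thesis using grading_base[OF ca less.prems(1,2,3) True less.prems(4)] by simp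
  next
    case False
    then obtain b where b: "\<sigma> i = b + 1" "b \<in> {1..m}" using ca_sig[OF ca, of i] less.prems by (cases "\<sigma> i") force+
    obtain a where a: "basis_vec N i = restrict (\<lambda>q. \<Sum>i'<N. \<Sum>r<N.
               if \<sigma> i' = 1 \<and> \<sigma> r = b
               then a i' r * lie_br N c (basis_vec N i') (basis_vec N r) q else 0) {..<N}"
      using ca_gen[OF ca b(2) less.prems(1) b(1)] by blast
    have aq: "(if q = i then 1 else 0) = (\<Sum>i'<N. \<Sum>r<N.
               if \<sigma> i' = 1 \<and> \<sigma> r = b then a i' r * c i' r q else 0)" if "q < N" for q
    proof -
      have "basis_vec N i q = (\<Sum>i'<N. \<Sum>r<N.
               if \<sigma> i' = 1 \<and> \<sigma> r = b
               then a i' r * lie_br N c (basis_vec N i') (basis_vec N r) q else 0)"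
        using that by (subst a) simp
      also have "\<dots> = (\<Sum>i'<N. \<Sum>r<N.
               if \<sigma> i' = 1 \<and> \<sigma> r = b then a i' r * c i' r q else 0)"
        using that by (intro sum.cong refl) (simp add: lie_br_basis)
      finally show ?thesis using that by (simp add: basis_vec_def)
    qed
    show ?thesis
    proof (rule ccontr)
      assume ne: "\<sigma> l \<noteq> \<sigma> i + \<sigma> k"
      have zero: "(\<Sum>q<N. c i' r q * c q k l) = 0" if "i' < N" "r < N" "\<sigma> i' = 1" "\<sigma> r = b" for i' r
      proof -
        have t1: "c k i' s * c r s l = 0" if "s < N" for s
        proof (rule ccontr)
          assume "c k i' s * c r s l \<noteq> 0"
          then have "c k i' s \<noteq> 0" "c r s l \<noteq> 0" by auto
          then have "c i' k s \<noteq> 0" using ca_anti[OF ca, of k i' s] \<open>i' < N\<close> \<open>s < N\<close> less.prems by simp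
          then have "\<sigma> s = \<sigma> i' + \<sigma> k" using grading_base[OF ca \<open>i' < N\<close> less.prems(2) \<open>s < N\<close> \<open>\<sigma> i' = 1\<close>] by blast
          moreover have "\<sigma> l = \<sigma> r + \<sigma> s" using less.hyps[of r s l] \<open>c r s l \<noteq> 0\<close> \<open>r < N\<close> \<open>s < N\<close> less.prems b \<open>\<sigma> r = b\<close> by auto
          ultimately show False using ne b \<open>\<sigma> r = b\<close> \<open>\<sigma> i' = 1\<close> by auto
        qed
        have t2: "c r k s * c i' s l = 0" if "s < N" for s
        proof (rule ccontr)
          assume "c r k s * c i' s l \<noteq> 0"
          then have "c r k s \<noteq> 0" "c i' s l \<noteq> 0" by auto
          have "\<sigma> s = \<sigma> r + \<sigma> k" using less.hyps[of r k s] \<open>c r k s \<noteq> 0\<close> \<open>r < N\<close> \<open>s < N\<close> less.prems b \<open>\<sigma> r = b\<close> by auto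
          moreover have "\<sigma> l = \<sigma> i' + \<sigma> s" using grading_base[OF ca \<open>i' < N\<close> \<open>s < N\<close> less.prems(3) \<open>\<sigma> i' = 1\<close> \<open>c i' s l \<noteq> 0\<close>] by blast
          ultimately show False using ne b \<open>\<sigma> r = b\<close> \<open>\<sigma> i' = 1\<close> by auto
        qed
        have jac: "(\<Sum>s<N. c k i' s * c r s l + c i' r s * c k s l + c r k s * c i' s l) = 0"
          using ca_jac[OF ca, of r k i' l] \<open>i' < N\<close> \<open>r < N\<close> less.prems by blast
        have "(\<Sum>s<N. c i' r s * c k s l) = 0"
          using jac t1 t2 by simp
        moreover have "(\<Sum>q<N. c i' r q * c q k l) = - (\<Sum>s<N. c i' r s * c k s l)"
        proof -
          have "(\<Sum>q<N. c i' r q * c q k l) = (\<Sum>q<N. - (c i' r q * c k q l))"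
            by (intro sum.cong refl) (use ca_anti[OF ca _ less.prems(2,3)] in auto)
          then show ?thesis by (simp add: sum_negf)
        qed
        ultimately show ?thesis by simp
      qed
      have "c i k l = (\<Sum>q<N. (if q = i then 1 else 0) * c q k l)"
        using less.prems by (simp add: if_distrib[of "\<lambda>x. x * _"] cong: if_cong)
      also have "\<dots> = (\<Sum>q<N. (\<Sum>i'<N. \<Sum>r<N.
               if \<sigma> i' = 1 \<and> \<sigma> r = b then a i' r * c i' r q else 0) * c q k l)"
        by (intro sum.cong refl) (simp add: aq)
      also have "\<dots> = (\<Sum>q<N. \<Sum>i'<N. \<Sum>r<N.
               (if \<sigma> i' = 1 \<and> \<sigma> r = b then a i' r * c i' r q else 0) * c q k l)"
        by (simp add: sum_distrib_right)
      also have "\<dots> = (\<Sum>i'<N. \<Sum>q<N. \<Sum>r<N.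
               (if \<sigma> i' = 1 \<and> \<sigma> r = b then a i' r * c i' r q else 0) * c q k l)"
        by (rule sum.swap)
      also have "\<dots> = (\<Sum>i'<N. \<Sum>r<N. \<Sum>q<N.
               (if \<sigma> i' = 1 \<and> \<sigma> r = b then a i' r * c i' r q else 0) * c q k l)"
        by (rule sum.cong[OF refl], rule sum.swap)
      also have "\<dots> = 0"
      proof (rule sum.neutral, rule ballI, rule sum.neutral, rule ballI)
        fix i' r assume "i' \<in> {..<N}" "r \<in> {..<N}"
        then show "(\<Sum>q<N. (if \<sigma> i' = 1 \<and> \<sigma> r = b then a i' r * c i' r q else 0) * c q k l) = 0"
          using zero[of i' r] by (cases "\<sigma> i' = 1 \<and> \<sigma> r = b") (auto simp: mult.assoc sum_distrib_left[symmetric])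
      qed
      finally show False using less.prems by simp
    qed
  qed
qed


lemma grading_lt:
  assumes ca: "carnot_algebra N m \<sigma> c" and "i < N" "k < N" "l < N" "c i k l \<noteq> 0"
  shows "i < l \<and> k < l"
proof -
  have e: "\<sigma> l = \<sigma> i + \<sigma> k" using grading[OF ca assms(2-5)] .
  have "1 \<le> \<sigma> i" "1 \<le> \<sigma> k" using ca_sig[OF ca] assms by auto
  then have "\<sigma> i < \<sigma> l" "\<sigma> k < \<sigma> l" using e by auto
  moreover have "\<not> l \<le> i" using ca_mono[OF ca, of l i] assms \<open>\<sigma> i < \<sigma> l\<close> by auto
  moreover have "\<not> l \<le> k" using ca_mono[OF ca, of l k] assms \<open>\<sigma> k < \<sigma> l\<close> by auto
  ultimately show ?thesis by auto
qed

lemma lie_br_dep: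
  assumes ca: "carnot_algebra N m \<sigma> c" and ag: "\<And>i. i < l \<Longrightarrow> x i = x' i \<and> y i = y' i"
  shows "lie_br N c x y l = lie_br N c x' y' l"
proof (cases "l < N")
  case True
  have eq: "x i * y k * c i k l = x' i * y' k * c i k l" if "i < N" "k < N" for i k
  proof (cases "c i k l = 0")
    case False
    then have "i < l \<and> k < l" using grading_lt[OF ca that True] by auto
    then show ?thesis using ag by auto
  qed simp
  have "(\<Sum>i<N. \<Sum>k<N. x i * y k * c i k l) = (\<Sum>i<N. \<Sum>k<N. x' i * y' k * c i k l)"
    by (intro sum.cong refl) (simp add: eq)
  then show ?thesis using True by (simp add: lie_br_apply)
qed (simp add: lie_br_apply)

lemma nest_dep:
  assumes ca: "carnot_algebra N m \<sigma> c"
  shows "(w \<noteq> [] \<longrightarrow> (\<forall>l. (\<forall>i\<le>l. x i = x' i \<and> y i = y' i) \<longrightarrow> nest N c x y w l = nest N c x' y' w l))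
       \<and> (2 \<le> length w \<longrightarrow> (\<forall>l. (\<forall>i<l. x i = x' i \<and> y i = y' i) \<longrightarrow> nest N c x y w l = nest N c x' y' w l))"
proof (induction w)
  case Nil then show ?case by simp
next
  case (Cons b w)
  show ?case
  proof (cases w)
    case Nil then show ?thesis by auto
  next
    case (Cons v va)
    have two: "nest N c x y (b # w) l = nest N c x' y' (b # w) l" if ag: "\<forall>i<l. x i = x' i \<and> y i = y' i" for l
    proof -
      have "lie_br N c (if b then x else y) (nest N c x y w) l = lie_br N c (if b then x' else y') (nest N c x' y' w) l"
      proof (rule lie_br_dep[OF ca])
        fix i assume "i < l"
        then have "\<forall>i'\<le>i. x i' = x' i' \<and> y i' = y' i'" using ag by auto
        then show "(if b then x else y) i = (if b then x' else y') i \<and> nest N c x y w i = nest N c x' y' w i"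
          using Cons.IH \<open>w = v # va\<close> by auto
      qed
      then show ?thesis using \<open>w = v # va\<close> by simp
    qed
    show ?thesis using two by auto
  qed
qed

lemma nest_dep2:
  assumes ca: "carnot_algebra N m \<sigma> c" and "2 \<le> length w" and "\<And>i. i < l \<Longrightarrow> x i = x' i \<and> y i = y' i"
  shows "nest N c x y w l = nest N c x' y' w l"
  using nest_dep[OF ca, of w x x' y y'] assms(2,3) by auto

lemma length_dynkin_word: "length (dynkin_word ps) = sum_list (map (\<lambda>(r, s). r + s) ps)"
  by (induction ps) (auto simp: dynkin_word_def)

lemma finite_dynkin_seqs: "finite (dynkin_seqs m n)"
proof -
  have "dynkin_seqs m n \<subseteq> {ps. set ps \<subseteq> {0..m} \<times> {0..m} \<and> length ps = n}"
  proof
    fix ps assume ps: "ps \<in> dynkin_seqs m n"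
    have "r + s \<le> m" if "(r, s) \<in> set ps" for r s
    proof -
      have "r + s \<in> set (map (\<lambda>(r, s). r + s) ps)" using that by force
      then have "r + s \<le> sum_list (map (\<lambda>(r, s). r + s) ps)" by (rule member_le_sum_list) simp
      then show ?thesis using ps by (auto simp: dynkin_seqs_def)
    qed
    then show "ps \<in> {ps. set ps \<subseteq> {0..m} \<times> {0..m} \<and> length ps = n}"
      using ps by (force simp: dynkin_seqs_def)
  qed
  moreover have "finite {ps. set ps \<subseteq> {0..m} \<times> {0..m} \<and> length ps = n}"
    by (rule finite_lists_length_eq) simp
  ultimately show ?thesis by (rule finite_subset)
qed

lemma dynkin_long:
  assumes "ps \<in> dynkin_seqs m n" "1 \<le> n" "ps \<noteq> [(1,0)]" "ps \<noteq> [(0,1)]"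
  shows "2 \<le> length (dynkin_word ps)"
proof -
  obtain p rest where ps: "ps = p # rest" using assms by (cases ps) (auto simp: dynkin_seqs_def)
  obtain r s where p: "p = (r, s)" by (cases p)
  have pos: "\<forall>(r, s)\<in>set ps. 0 < r + s" using assms by (auto simp: dynkin_seqs_def)
  show ?thesis
  proof (cases rest)
    case Nil
    then have "r + s \<noteq> 1" using assms ps p by auto
    then show ?thesis using pos ps p Nil by (auto simp: length_dynkin_word)
  next
    case (Cons p' rest')
    obtain r' s' where p': "p' = (r', s')" by (cases p')
    have "0 < r + s" "0 < r' + s'" using pos ps p Cons p' by auto
    then show ?thesis using ps p Cons p' by (auto simp: length_dynkin_word)
  qed
qed

lemma gmul_dep:
  assumes ca: "carnot_algebra N m \<sigma> c" and l: "l < N"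
    and ag: "\<And>i. i < l \<Longrightarrow> x i = x' i \<and> y i = y' i"
  shows "gmul N m c x y l - x l - y l = gmul N m c x' y' l - x' l - y' l"
proof -
  define D where "D ps = dynkin_coef ps * (nest N c x y (dynkin_word ps) l - nest N c x' y' (dynkin_word ps) l)" for ps
  define T where "T = {[(1::nat,0::nat)], [(0,1)]}"
  have m1: "1 \<le> m" using ca_m[OF ca] .
  have "gmul N m c x y l - gmul N m c x' y' l = (\<Sum>n\<in>{1..m}. \<Sum>ps\<in>dynkin_seqs m n. D ps)"
    using l by (simp add: gmul_def D_def sum_subtractf[symmetric] right_diff_distrib)
  also have "\<dots> = (\<Sum>n\<in>{1..m}. \<Sum>ps\<in>dynkin_seqs m n \<inter> T. D ps)"
  proof (rule sum.cong[OF refl])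
    fix n assume n: "n \<in> {1..m}"
    have "(\<Sum>ps\<in>dynkin_seqs m n. D ps) = (\<Sum>ps\<in>dynkin_seqs m n. if ps \<in> T then D ps else 0)"
    proof (rule sum.cong[OF refl])
      fix ps assume ps: "ps \<in> dynkin_seqs m n"
      show "D ps = (if ps \<in> T then D ps else 0)"
      proof (cases "ps \<in> T")
        case False
        then have "2 \<le> length (dynkin_word ps)" using dynkin_long[OF ps] n by (auto simp: T_def)
        then show ?thesis using False nest_dep2[OF ca _ ag] by (simp add: D_def)
      qed simp
    qed
    also have "\<dots> = (\<Sum>ps\<in>dynkin_seqs m n \<inter> T. D ps)"
      by (rule sum.inter_restrict[symmetric]) (rule finite_dynkin_seqs)
    finally show "(\<Sum>ps\<in>dynkin_seqs m n. D ps) = (\<Sum>ps\<in>dynkin_seqs m n \<inter> T. D ps)" .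
  qed
  also have "\<dots> = (\<Sum>n\<in>{1..m}. if n = 1 then D [(1,0)] + D [(0,1)] else 0)"
  proof (rule sum.cong[OF refl])
    fix n assume n: "n \<in> {1..m}"
    show "(\<Sum>ps\<in>dynkin_seqs m n \<inter> T. D ps) = (if n = 1 then D [(1,0)] + D [(0,1)] else 0)"
    proof (cases "n = 1")
      case True
      then have "dynkin_seqs m n \<inter> T = T" using m1 by (auto simp: T_def dynkin_seqs_def)
      then show ?thesis using True by (simp add: T_def)
    next
      case False
      then have "dynkin_seqs m n \<inter> T = {}" by (auto simp: T_def dynkin_seqs_def)
      then show ?thesis using False by simp
    qed
  qed
  also have "\<dots> = D [(1,0)] + D [(0,1)]" using m1 by simp
  also have "\<dots> = (x l - x' l) + (y l - y' l)"
    by (simp add: D_def dynkin_coef_def dynkin_word_def)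
  finally show ?thesis by simp
qed

abbreviation PI :: "nat set \<Rightarrow> vec measure" where "PI I \<equiv> PiM I (\<lambda>_. lborel)"
abbreviation PM :: "nat \<Rightarrow> vec measure" where "PM N \<equiv> PI {..<N}"

lemma psf_lborel: "product_sigma_finite (\<lambda>_::nat. (lborel :: real measure))"
  by (simp add: product_sigma_finite_def lborel.sigma_finite_measure_axioms)

lemma comp_meas[measurable]: "(\<lambda>x. x i) \<in> borel_measurable (PiM I (\<lambda>_::nat. (lborel :: real measure)))"
proof (cases "i \<in> I")
  case True then show ?thesis by measurable
next
  case False
  have "(\<lambda>x. undefined :: real) \<in> borel_measurable (PiM I (\<lambda>_::nat. (lborel :: real measure)))" by simp
  then show ?thesis
    by (rule measurable_cong[THEN iffD1, rotated]) (use False in \<open>auto simp: space_PiM PiE_def extensional_def\<close>)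
qed

lemma meas_into_PM:
  assumes "\<And>l. l < N \<Longrightarrow> (\<lambda>\<omega>. f \<omega> l) \<in> borel_measurable M'"
    and "\<And>\<omega>. \<omega> \<in> space M' \<Longrightarrow> f \<omega> \<in> extensional {..<N}"
  shows "f \<in> measurable M' (PM N)"
proof -
  have "(\<lambda>\<omega> i. f \<omega> i) \<in> measurable M' (PM N)"
    by (rule measurable_PiM_single') (use assms in \<open>auto simp: PiE_def\<close>)
  then show ?thesis by simp
qed

lemma meas_lie_br:
  assumes "\<And>i. (\<lambda>\<omega>. u \<omega> i) \<in> borel_measurable M'" "\<And>i. (\<lambda>\<omega>. v \<omega> i) \<in> borel_measurable M'"
  shows "(\<lambda>\<omega>. lie_br N c (u \<omega>) (v \<omega>) l) \<in> borel_measurable M'"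
proof (cases "l < N")
  case True
  have "(\<lambda>\<omega>. \<Sum>i<N. \<Sum>k<N. u \<omega> i * v \<omega> k * c i k l) \<in> borel_measurable M'"
    using assms by measurable
  then show ?thesis using True by (simp add: lie_br_apply)
qed (simp add: lie_br_apply)

lemma meas_nest:
  assumes "\<And>i. (\<lambda>\<omega>. u \<omega> i) \<in> borel_measurable M'" "\<And>i. (\<lambda>\<omega>. v \<omega> i) \<in> borel_measurable M'"
  shows "(\<lambda>\<omega>. nest N c (u \<omega>) (v \<omega>) w l) \<in> borel_measurable M'"
proof (induction w arbitrary: l)
  case Nil then show ?case by simp
next
  case (Cons b w)
  show ?case
  proof (cases w)
    case Nil then show ?thesis using assms by (cases b) auto
  next
    case (Cons v' va)
    have "(\<lambda>\<omega>. lie_br N c (if b then u \<omega> else v \<omega>) (nest N c (u \<omega>) (v \<omega>) w) l) \<in> borel_measurable M'"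
      by (rule meas_lie_br) (use assms Cons.IH in \<open>cases b; auto\<close>)+
    then show ?thesis using Cons by simp
  qed
qed

lemma meas_gmul:
  assumes "\<And>i. (\<lambda>\<omega>. u \<omega> i) \<in> borel_measurable M'" "\<And>i. (\<lambda>\<omega>. v \<omega> i) \<in> borel_measurable M'"
  shows "(\<lambda>\<omega>. gmul N m c (u \<omega>) (v \<omega>) l) \<in> borel_measurable M'"
proof (cases "l < N")
  case True
  have [measurable]: "\<And>w l. (\<lambda>\<omega>. nest N c (u \<omega>) (v \<omega>) w l) \<in> borel_measurable M'"
    using meas_nest[OF assms] .
  have "(\<lambda>\<omega>. \<Sum>n\<in>{1..m}. \<Sum>ps\<in>dynkin_seqs m n. dynkin_coef ps * nest N c (u \<omega>) (v \<omega>) (dynkin_word ps) l) \<in> borel_measurable M'"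
    by measurable
  then show ?thesis using True by (simp add: gmul_def)
qed (simp add: gmul_def)

lemma gmul_ext: "gmul N m c x y \<in> extensional {..<N}"
  by (simp add: gmul_def)

lemma meas_gmulP:
  assumes "\<And>i. (\<lambda>\<omega>. u \<omega> i) \<in> borel_measurable M'" "\<And>i. (\<lambda>\<omega>. v \<omega> i) \<in> borel_measurable M'"
  shows "(\<lambda>\<omega>. gmul N m c (u \<omega>) (v \<omega>)) \<in> measurable M' (PM N)"
  by (rule meas_into_PM) (use meas_gmul[OF assms] gmul_ext in auto)

lemma PM_insert: "k < N \<Longrightarrow> {..<N} = insert k ({..<N} - {k})" by auto

lemma shear_preserving:
  fixes G :: "vec \<Rightarrow> real"
  assumes k: "k < N" and Gm[measurable]: "G \<in> borel_measurable (PM N)"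
    and Gd: "\<And>y y'. (\<And>i. i < k \<Longrightarrow> y i = y' i) \<Longrightarrow> G y = G y'"
  shows "(\<lambda>z. z(k := z k + G z)) \<in> measurable (PM N) (PM N)"
    and "distr (PM N) (PM N) (\<lambda>z. z(k := z k + G z)) = PM N"
proof -
  define S where "S = (\<lambda>z::vec. z(k := z k + G z))"
  show Sm: "(\<lambda>z. z(k := z k + G z)) \<in> measurable (PM N) (PM N)"
  proof (rule meas_into_PM)
    fix l assume "l < N"
    show "(\<lambda>z. (z(k := z k + G z)) l) \<in> borel_measurable (PM N)"
      by (cases "l = k") simp_all
  next
    fix z assume "z \<in> space (PM N)"
    then show "z(k := z k + G z) \<in> extensional {..<N}" using k by (auto simp: space_PiM PiE_def extensional_def)
  qed
  define K where "K = {..<N} - {k}"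
  have KN: "{..<N} = insert k K" "finite K" "k \<notin> K" using k by (auto simp: K_def)
  interpret P: product_sigma_finite "\<lambda>_::nat. (lborel :: real measure)" by (rule psf_lborel)
  show "distr (PM N) (PM N) (\<lambda>z. z(k := z k + G z)) = PM N"
  proof (rule measure_eqI)
    show "sets (distr (PM N) (PM N) (\<lambda>z. z(k := z k + G z))) = sets (PM N)" by simp
  next
    fix A assume A: "A \<in> sets (distr (PM N) (PM N) (\<lambda>z. z(k := z k + G z)))"
    then have A': "A \<in> sets (PM N)" by simp
    have "emeasure (distr (PM N) (PM N) (\<lambda>z. z(k := z k + G z))) A
        = (\<integral>\<^sup>+ z. indicator A z \<partial>distr (PM N) (PM N) (\<lambda>z. z(k := z k + G z)))"
      using A by simp
    also have "\<dots> = (\<integral>\<^sup>+ z. indicator A (z(k := z k + G z)) \<partial>PM N)"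
      by (rule nn_integral_distr[OF Sm]) (use A' in simp)
    also have "\<dots> = (\<integral>\<^sup>+ x. (\<integral>\<^sup>+ y. indicator A ((x(k := y))(k := (x(k := y)) k + G (x(k := y)))) \<partial>lborel) \<partial>PI K)"
      unfolding KN(1) by (rule P.product_nn_integral_insert[OF KN(2,3)]) (use A' Sm KN in simp)
    also have "\<dots> = (\<integral>\<^sup>+ x. (\<integral>\<^sup>+ y. indicator A (x(k := y)) \<partial>lborel) \<partial>PI K)"
    proof (rule nn_integral_cong)
      fix x assume x: "x \<in> space (PI K)"
      have hm: "(\<lambda>y. indicator A (x(k := y)) :: ennreal) \<in> borel_measurable borel"
      proof -
        have "(\<lambda>y. x(k := y)) \<in> measurable lborel (PM N)"
          unfolding KN(1) by (rule measurable_component_update[OF x KN(3)])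
        then have "(\<lambda>y. x(k := y)) \<in> measurable borel (PM N)" by simp
        then show ?thesis using A' by measurable
      qed
      define a where "a = G (x(k := 0))"
      have ga: "G (x(k := y)) = a" for y unfolding a_def by (rule Gd) auto
      have "(\<integral>\<^sup>+ y. indicator A ((x(k := y))(k := (x(k := y)) k + G (x(k := y)))) \<partial>lborel)
          = (\<integral>\<^sup>+ y. indicator A (x(k := a + 1 * y)) \<partial>lborel)"
        by (simp add: add.commute ga)
      also have "\<dots> = (\<integral>\<^sup>+ y. indicator A (x(k := y)) \<partial>lborel)"
        using nn_integral_real_affine[OF hm, of 1 a] by simp
      finally show "(\<integral>\<^sup>+ y. indicator A ((x(k := y))(k := (x(k := y)) k + G (x(k := y)))) \<partial>lborel)
          = (\<integral>\<^sup>+ y. indicator A (x(k := y)) \<partial>lborel)" .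
    qed
    also have "\<dots> = (\<integral>\<^sup>+ z. indicator A z \<partial>PM N)"
      unfolding KN(1) by (rule P.product_nn_integral_insert[OF KN(2,3), symmetric]) (use A' KN in simp)
    also have "\<dots> = emeasure (PM N) A" using A' by simp
    finally show "emeasure (distr (PM N) (PM N) (\<lambda>z. z(k := z k + G z))) A = emeasure (PM N) A" .
  qed
qed

lemma E_preserving:
  assumes j: "j < N"
  shows "(\<lambda>(q, t). q(j := t)) \<in> measurable (PI ({..<N} - {j}) \<Otimes>\<^sub>M lborel) (PM N)"
    and "distr (PI ({..<N} - {j}) \<Otimes>\<^sub>M lborel) (PM N) (\<lambda>(q, t). q(j := t)) = PM N"
proof -
  define K where "K = {..<N} - {j}"
  have KN: "{..<N} = insert j K" "finite K" "j \<notin> K" using j by (auto simp: K_def)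
  interpret P: product_sigma_finite "\<lambda>_::nat. (lborel :: real measure)" by (rule psf_lborel)
  show Em: "(\<lambda>(q, t). q(j := t)) \<in> measurable (PI ({..<N} - {j}) \<Otimes>\<^sub>M lborel) (PM N)"
    using measurable_add_dim[of j "{..<N} - {j}" "\<lambda>_. lborel"] j by (simp add: insert_absorb)
  show "distr (PI ({..<N} - {j}) \<Otimes>\<^sub>M lborel) (PM N) (\<lambda>(q, t). q(j := t)) = PM N"
  proof (rule measure_eqI)
    fix A assume A: "A \<in> sets (distr (PI ({..<N} - {j}) \<Otimes>\<^sub>M lborel) (PM N) (\<lambda>(q, t). q(j := t)))"
    then have A'[measurable]: "A \<in> sets (PM N)" by simp
    have m2: "(\<lambda>z. indicator A (case z of (q, t) \<Rightarrow> q(j := t)) :: ennreal) \<in> borel_measurable (PI K \<Otimes>\<^sub>M lborel)"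
      using Em unfolding K_def[symmetric] by measurable
    have "emeasure (distr (PI ({..<N} - {j}) \<Otimes>\<^sub>M lborel) (PM N) (\<lambda>(q, t). q(j := t))) A
        = (\<integral>\<^sup>+ z. indicator A z \<partial>distr (PI ({..<N} - {j}) \<Otimes>\<^sub>M lborel) (PM N) (\<lambda>(q, t). q(j := t)))"
      using A by simp
    also have "\<dots> = (\<integral>\<^sup>+ z. indicator A (case z of (q, t) \<Rightarrow> q(j := t)) \<partial>(PI K \<Otimes>\<^sub>M lborel))"
      unfolding K_def by (rule nn_integral_distr[OF Em]) simp
    also have "\<dots> = (\<integral>\<^sup>+ x. (\<integral>\<^sup>+ y. indicator A (x(j := y)) \<partial>lborel) \<partial>PI K)"
      using lborel.nn_integral_fst[OF m2] by simp
    also have "\<dots> = (\<integral>\<^sup>+ z. indicator A z \<partial>PM N)"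
      unfolding KN(1) by (rule P.product_nn_integral_insert[OF KN(2,3), symmetric]) (use A' KN in simp)
    also have "\<dots> = emeasure (PM N) A" using A' by simp
    finally show "emeasure (distr (PI ({..<N} - {j}) \<Otimes>\<^sub>M lborel) (PM N) (\<lambda>(q, t). q(j := t))) A = emeasure (PM N) A" .
  qed simp
qed

definition Fm :: "nat \<Rightarrow> nat \<Rightarrow> (nat \<Rightarrow> nat \<Rightarrow> nat \<Rightarrow> real) \<Rightarrow> nat \<Rightarrow> vec \<Rightarrow> vec" where
  "Fm N m c j y = gmul N m c (y(j := 0)) (exp_coord N j (y j))"

lemma exp_coord_apply: "exp_coord N j t i = (if i < N then (if i = j then t else 0) else undefined)"
  by (simp add: exp_coord_def)

lemma F_tri:
  assumes ca: "carnot_algebra N m \<sigma> c" and j: "j < N" and l: "l < N"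
    and ag: "\<And>i. i < l \<Longrightarrow> y i = y' i"
  shows "Fm N m c j y l - y l = Fm N m c j y' l - y' l"
proof -
  have lin: "(z(j := 0)) l + exp_coord N j (z j) l = z l" for z
    using l by (simp add: exp_coord_apply)
  have "gmul N m c (y(j := 0)) (exp_coord N j (y j)) l - (y(j := 0)) l - exp_coord N j (y j) l
      = gmul N m c (y'(j := 0)) (exp_coord N j (y' j)) l - (y'(j := 0)) l - exp_coord N j (y' j) l"
    by (rule gmul_dep[OF ca l]) (use ag in \<open>auto simp: exp_coord_apply\<close>)
  then show ?thesis using lin[of y] lin[of y'] by (simp add: Fm_def algebra_simps)
qed

lemma upd_comp_meas[measurable]: "(\<lambda>z. (z(j := a)) i) \<in> borel_measurable (PI I)"
  by (cases "i = j") simp_all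

lemma exp_comp_meas[measurable]: "(\<lambda>z. exp_coord N j (z j) i) \<in> borel_measurable (PI I)"
  by (simp add: exp_coord_apply)

lemma Fm_meas_comp[measurable]: "(\<lambda>y. Fm N m c j y l) \<in> borel_measurable (PM N)"
  unfolding Fm_def
  by (rule meas_gmul) simp_all

lemma Fm_meas: "Fm N m c j \<in> measurable (PM N) (PM N)"
  by (rule meas_into_PM[OF Fm_meas_comp]) (simp add: Fm_def gmul_ext)

definition Hk :: "nat \<Rightarrow> nat \<Rightarrow> (nat \<Rightarrow> nat \<Rightarrow> nat \<Rightarrow> real) \<Rightarrow> nat \<Rightarrow> nat \<Rightarrow> vec \<Rightarrow> vec" where
  "Hk N m c j k y = restrict (\<lambda>l. if k \<le> l then Fm N m c j y l else y l) {..<N}"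

lemma Hk_meas: "Hk N m c j k \<in> measurable (PM N) (PM N)"
proof (rule meas_into_PM)
  fix l assume "l < N"
  then show "(\<lambda>y. Hk N m c j k y l) \<in> borel_measurable (PM N)"
    by (cases "k \<le> l") (simp_all add: Hk_def)
qed (simp add: Hk_def)

lemma Fm_preserving:
  assumes ca: "carnot_algebra N m \<sigma> c" and j: "j < N"
  shows "distr (PM N) (PM N) (Fm N m c j) = PM N"
proof -
  have "distr (PM N) (PM N) (Hk N m c j k) = PM N" if "k \<le> N" for k
    using that
  proof (induction k rule: inc_induct)
    case base
    have "distr (PM N) (PM N) (Hk N m c j N) = distr (PM N) (PM N) (\<lambda>x. x)"
      by (rule distr_cong) (auto simp: Hk_def space_PiM PiE_def extensional_def)
    then show ?case by simp
  next
    case (step n)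
    define G where "G z = Fm N m c j z n - z n" for z
    have Gm: "G \<in> borel_measurable (PM N)" unfolding G_def by measurable
    have Gd: "G y = G y'" if "\<And>i. i < n \<Longrightarrow> y i = y' i" for y y'
      unfolding G_def by (rule F_tri[OF ca j]) (use step that in auto)
    note sh = shear_preserving[OF _ Gm Gd]
    have eq: "Hk N m c j n y = (\<lambda>z. z(n := z n + G z)) (Hk N m c j (Suc n) y)" if "y \<in> space (PM N)" for y
    proof
      fix l
      have Gz: "G (Hk N m c j (Suc n) y) = G y" by (rule Gd) (use step in \<open>auto simp: Hk_def\<close>)
      show "Hk N m c j n y l = ((\<lambda>z. z(n := z n + G z)) (Hk N m c j (Suc n) y)) l"
        using step Gz by (auto simp: Hk_def G_def)
    qed
    have "distr (PM N) (PM N) (Hk N m c j n) = distr (PM N) (PM N) ((\<lambda>z. z(n := z n + G z)) \<circ> Hk N m c j (Suc n))"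
      by (rule distr_cong) (auto simp: eq)
    also have "\<dots> = distr (distr (PM N) (PM N) (Hk N m c j (Suc n))) (PM N) (\<lambda>z. z(n := z n + G z))"
      by (rule distr_distr[symmetric]) (use sh(1) step Hk_meas in auto)
    also have "\<dots> = PM N" using step sh(2) by simp
    finally show ?case .
  qed
  from this[of 0] have "distr (PM N) (PM N) (Hk N m c j 0) = PM N" by simp
  moreover have "distr (PM N) (PM N) (Fm N m c j) = distr (PM N) (PM N) (Hk N m c j 0)"
    by (rule distr_cong) (auto simp: Hk_def Fm_def gmul_def)
  ultimately show ?thesis by simp
qed

lemma compl_AE_meas:
  fixes f g :: "'a \<Rightarrow> real"
  assumes g: "g \<in> borel_measurable M" and ae: "AE x in M. f x = g x"
  shows "f \<in> borel_measurable (completion M)"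
proof (rule measurableI)
  fix x assume "x \<in> space (completion M)" then show "f x \<in> space borel" by simp
next
  fix B :: "real set" assume B: "B \<in> sets borel"
  have A: "g -` B \<inter> space M \<in> sets (completion M)" using g B by (auto intro: measurable_sets)
  have "AE x in M. (x \<in> g -` B \<inter> space M) \<longleftrightarrow> (x \<in> f -` B \<inter> space M)"
    using ae by (rule eventually_mono) auto
  then have "AE x in completion M. (x \<in> g -` B \<inter> space M) \<longleftrightarrow> (x \<in> f -` B \<inter> space M)"
    by (rule AE_completion)
  then have "f -` B \<inter> space M \<in> sets (completion M)"
    by (rule completion.in_sets_AE[OF _ A]) auto
  then show "f -` B \<inter> space (completion M) \<in> sets (completion M)" by simp
qed

lemma compl_AE_integrable:
  fixes f g :: "'a \<Rightarrow> real"
  assumes g: "g \<in> borel_measurable M" and ae: "AE x in M. f x = g x"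
  shows "integrable (completion M) f \<longleftrightarrow> integrable M g"
proof -
  have "integrable (completion M) f \<longleftrightarrow> integrable (completion M) g"
    by (rule integrable_cong_AE) (use compl_AE_meas[OF g ae] g AE_completion[OF ae] measurable_completion in auto)
  also have "\<dots> \<longleftrightarrow> integrable M g" by (rule integrable_completion[OF g])
  finally show ?thesis .
qed

lemma compl_AE_integral:
  fixes f g :: "'a \<Rightarrow> real"
  assumes g: "g \<in> borel_measurable M" and ae: "AE x in M. f x = g x"
  shows "integral\<^sup>L (completion M) f = integral\<^sup>L M g"
proof -
  have "integral\<^sup>L (completion M) f = integral\<^sup>L (completion M) g"
    by (rule integral_cong_AE) (use compl_AE_meas[OF g ae] g AE_completion[OF ae] measurable_completion in auto)
  also have "\<dots> = integral\<^sup>L M g" by (rule integral_completion[OF g])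
  finally show ?thesis .
qed

lemma iota_meas:
  assumes j: "j < N"
  shows "(\<lambda>q. q(j := 0)) \<in> measurable (PI ({..<N} - {j})) (restrict_space (PM N) (Pi_plane N j))"
proof (rule measurable_restrict_space2)
  show "(\<lambda>q. q(j := 0)) \<in> space (PI ({..<N} - {j})) \<rightarrow> Pi_plane N j"
    using j by (auto simp: Pi_plane_def space_PiM PiE_def extensional_def)
  show "(\<lambda>q. q(j := 0)) \<in> measurable (PI ({..<N} - {j})) (PM N)"
    by (rule meas_into_PM) (use j in \<open>auto simp: space_PiM PiE_def extensional_def\<close>)
qed

lemma rho_meas:
  shows "(\<lambda>p. restrict p ({..<N} - {j})) \<in> measurable (restrict_space (PM N) (Pi_plane N j)) (PI ({..<N} - {j}))"
proof (rule measurable_restrict)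
  fix i show "(\<lambda>p. p i) \<in> measurable (restrict_space (PM N) (Pi_plane N j)) lborel"
    by (rule measurable_restrict_space1) simp
qed

lemma rho_iota: "q \<in> space (PI ({..<N} - {j})) \<Longrightarrow> restrict (q(j := 0)) ({..<N} - {j}) = q"
  by (auto simp: space_PiM PiE_def extensional_def restrict_def)

lemma iota_rho: "p \<in> space (restrict_space (PM N) (Pi_plane N j)) \<Longrightarrow> (restrict p ({..<N} - {j}))(j := 0) = p"
  by (auto simp: space_restrict_space Pi_plane_def space_PiM PiE_def extensional_def restrict_def)

lemma plane_AE:
  assumes j: "j < N" and ae: "AE q in PI ({..<N} - {j}). P (q(j := 0))"
  shows "AE p in distr (PI ({..<N} - {j})) (restrict_space (PM N) (Pi_plane N j)) (\<lambda>q. q(j := 0)). P p"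
proof -
  let ?P' = "PI ({..<N} - {j})" and ?R = "restrict_space (PM N) (Pi_plane N j)"
  obtain N1 where N1: "\<And>q. q \<in> space ?P' - N1 \<Longrightarrow> P (q(j := 0))" "N1 \<in> null_sets ?P'"
    using AE_E3[OF ae] by blast
  define B where "B = (\<lambda>p. restrict p ({..<N} - {j})) -` N1 \<inter> space ?R"
  have Bs: "B \<in> sets ?R" unfolding B_def using rho_meas N1(2) by (auto intro: measurable_sets)
  have "(\<lambda>q. q(j := 0)) -` B \<inter> space ?P' = N1 \<inter> space ?P'"
    using iota_meas[OF j, THEN measurable_space] rho_iota by (auto simp: B_def)
  also have "\<dots> = N1" using N1(2) null_setsD2 sets.sets_into_space by blast
  finally have "emeasure (distr ?P' ?R (\<lambda>q. q(j := 0))) B = 0"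
    using Bs N1(2) iota_meas[OF j] by (simp add: emeasure_distr null_setsD1)
  then have Bn: "B \<in> null_sets (distr ?P' ?R (\<lambda>q. q(j := 0)))" using Bs by auto
  show ?thesis
  proof (rule AE_I'[OF Bn])
    show "{p \<in> space (distr ?P' ?R (\<lambda>q. q(j := 0))). \<not> P p} \<subseteq> B"
    proof safe
      fix p assume p: "p \<in> space (distr ?P' ?R (\<lambda>q. q(j := 0)))" "\<not> P p"
      then have pR: "p \<in> space ?R" by simp
      have "restrict p ({..<N} - {j}) \<in> space ?P'" using rho_meas[THEN measurable_space] pR by blast
      moreover have "\<not> P ((restrict p ({..<N} - {j}))(j := 0))" using iota_rho[OF pR] p(2) by simp
      ultimately have "restrict p ({..<N} - {j}) \<in> N1" using N1(1) by blast
      then show "p \<in> B" using pR by (simp add: B_def)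
    qed
  qed
qed

lemma dens_const:
  fixes \<phi> :: "'a \<Rightarrow> real"
  assumes \<Theta>: "\<Theta> > 0" and m: "\<phi> \<in> borel_measurable M"
  shows "integrable (density M (\<lambda>_. ennreal \<Theta>)) \<phi> \<longleftrightarrow> integrable M \<phi>"
    and "integral\<^sup>L (density M (\<lambda>_. ennreal \<Theta>)) \<phi> = \<Theta> * integral\<^sup>L M \<phi>"
proof -
  show "integrable (density M (\<lambda>_. ennreal \<Theta>)) \<phi> \<longleftrightarrow> integrable M \<phi>"
    using integrable_density[OF m, of "\<lambda>_. \<Theta>"] \<Theta> by simp
  show "integral\<^sup>L (density M (\<lambda>_. ennreal \<Theta>)) \<phi> = \<Theta> * integral\<^sup>L M \<phi>"
    using integral_density[OF m, of "\<lambda>_. \<Theta>"] \<Theta> by simp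
qed

theorem mainTheorem2:
  fixes N m j :: nat and \<sigma> :: "nat \<Rightarrow> nat" and c :: "nat \<Rightarrow> nat \<Rightarrow> nat \<Rightarrow> real"
    and \<Theta>G \<Theta>P :: real and f :: "vec \<Rightarrow> real"
  assumes "carnot_algebra N m \<sigma> c" and "j < N" and "\<sigma> j = 1"
    and "\<Theta>G > 0" and "\<Theta>P > 0"
    and "integrable (H_G \<Theta>G N) f"
  shows "(AE p in H_Pi \<Theta>P N j.
            integrable lebesgue (\<lambda>t. f (gmul N m c p (exp_coord N j t))))
       \<and> (AE t in lebesgue.
            integrable (H_Pi \<Theta>P N j) (\<lambda>p. f (gmul N m c p (exp_coord N j t))))
       \<and> integrable (H_Pi \<Theta>P N j)
            (\<lambda>p. \<integral>t. f (gmul N m c p (exp_coord N j t)) \<partial>lebesgue)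
       \<and> integrable lebesgue
            (\<lambda>t. \<integral>p. f (gmul N m c p (exp_coord N j t)) \<partial>H_Pi \<Theta>P N j)
       \<and> (\<integral>p. (\<integral>t. f (gmul N m c p (exp_coord N j t)) \<partial>lebesgue) \<partial>H_Pi \<Theta>P N j)
         = (\<integral>t. (\<integral>p. f (gmul N m c p (exp_coord N j t)) \<partial>H_Pi \<Theta>P N j) \<partial>lebesgue)
       \<and> (\<integral>t. (\<integral>p. f (gmul N m c p (exp_coord N j t)) \<partial>H_Pi \<Theta>P N j) \<partial>lebesgue)
         = \<Theta>P / \<Theta>G * (\<integral>x. f x \<partial>H_G \<Theta>G N)"
proof -
  note ca = assms(1) and j = assms(2) and \<Theta>G = assms(4) and \<Theta>P = assms(5) and fint0 = assms(6)
  define K where "K = {..<N} - {j}"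
  define R where "R = restrict_space (PM N) (Pi_plane N j)"
  define D where "D = distr (PI K) R (\<lambda>q. q(j := 0))"
  have HPi: "H_Pi \<Theta>P N j = density (completion D) (\<lambda>_. ennreal \<Theta>P)"
    by (simp add: H_Pi_def lebPlane_def D_def R_def K_def)
  have HG: "H_G \<Theta>G N = density (completion (PM N)) (\<lambda>_. ennreal \<Theta>G)"
    by (simp add: H_G_def lebN_def)
  interpret PS: product_sigma_finite "\<lambda>_::nat. (lborel :: real measure)" by (rule psf_lborel)
  interpret P': sigma_finite_measure "PI K" by (rule PS.sigma_finite) (simp add: K_def)
  interpret P: pair_sigma_finite "PI K" lborel ..
  have iota: "(\<lambda>q. q(j := 0)) \<in> measurable (PI K) R"
    unfolding K_def R_def by (rule iota_meas[OF j])
  have planeAE: "AE p in D. Pr p" if "AE q in PI K. Pr (q(j := 0))" for Pr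
  proof -
    have "AE q in PI ({..<N} - {j}). Pr (q(j := 0))" unfolding K_def[symmetric] by (rule that)
    then show ?thesis unfolding D_def R_def K_def by (rule plane_AE[OF j])
  qed
  have compR[measurable]: "(\<lambda>p. p i) \<in> borel_measurable R" for i
    unfolding R_def by (rule measurable_restrict_space1) simp

  define \<Phi> where "\<Phi> = (\<lambda>(q, t). gmul N m c (q(j := 0)) (exp_coord N j t))"
  have \<Phi>m[measurable]: "\<Phi> \<in> measurable (PI K \<Otimes>\<^sub>M lborel) (PM N)"
  proof -
    have "(\<lambda>z. gmul N m c ((fst z)(j := 0)) (exp_coord N j (snd z))) \<in> measurable (PI K \<Otimes>\<^sub>M lborel) (PM N)"
      by (rule meas_gmulP) (simp_all add: exp_coord_apply)
    moreover have "\<Phi> = (\<lambda>z. gmul N m c ((fst z)(j := 0)) (exp_coord N j (snd z)))"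
      by (auto simp: \<Phi>_def)
    ultimately show ?thesis by simp
  qed
  have \<Phi>pres: "distr (PI K \<Otimes>\<^sub>M lborel) (PM N) \<Phi> = PM N"
  proof -
    note E = E_preserving[OF j, folded K_def]
    have "distr (PI K \<Otimes>\<^sub>M lborel) (PM N) \<Phi> = distr (PI K \<Otimes>\<^sub>M lborel) (PM N) (Fm N m c j \<circ> (\<lambda>(q, t). q(j := t)))"
      by (rule distr_cong) (auto simp: \<Phi>_def Fm_def)
    also have "\<dots> = distr (distr (PI K \<Otimes>\<^sub>M lborel) (PM N) (\<lambda>(q, t). q(j := t))) (PM N) (Fm N m c j)"
      by (rule distr_distr[symmetric]) (use Fm_meas E(1) in auto)
    also have "\<dots> = PM N" using E(2) Fm_preserving[OF ca j] by simp
    finally show ?thesis .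
  qed

  have fmC: "f \<in> borel_measurable (completion (PM N))"
    using borel_measurable_integrable[OF fint0] unfolding HG
    by (subst (asm) measurable_cong_sets[OF sets_density refl])
  have fintC: "integrable (completion (PM N)) f"
    using fint0 dens_const(1)[OF \<Theta>G fmC] HG by simp
  have fintG: "(\<integral>x. f x \<partial>H_G \<Theta>G N) = \<Theta>G * (\<integral>x. f x \<partial>completion (PM N))"
    using dens_const(2)[OF \<Theta>G fmC] HG by simp
  obtain g where gm[measurable]: "g \<in> borel_measurable (PM N)" and fg: "AE x in PM N. f x = g x"
    using completion_ex_borel_measurable_real[OF fmC] by blast
  have gint: "integrable (PM N) g" using fintC compl_AE_integrable[OF gm fg] by simp
  have fgint: "(\<integral>x. f x \<partial>completion (PM N)) = (\<integral>x. g x \<partial>PM N)" by (rule compl_AE_integral[OF gm fg])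
  obtain Z where Z: "\<And>x. x \<in> space (PM N) - Z \<Longrightarrow> f x = g x" "Z \<in> null_sets (PM N)"
    using AE_E3[OF fg] by blast
  define Z' where "Z' = \<Phi> -` Z \<inter> space (PI K \<Otimes>\<^sub>M lborel)"
  have Z's: "Z' \<in> sets (PI K \<Otimes>\<^sub>M lborel)" unfolding Z'_def by (rule measurable_sets[OF \<Phi>m]) (use Z(2) in auto)
  have "emeasure (PI K \<Otimes>\<^sub>M lborel) Z' = emeasure (distr (PI K \<Otimes>\<^sub>M lborel) (PM N) \<Phi>) Z"
    unfolding Z'_def by (rule emeasure_distr[OF \<Phi>m, symmetric]) (use Z(2) in auto)
  also have "\<dots> = 0" using \<Phi>pres Z(2) by (simp add: null_setsD1)
  finally have Z'n: "Z' \<in> null_sets (PI K \<Otimes>\<^sub>M lborel)" using Z's by auto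
  have fgZ: "f (\<Phi> z) = g (\<Phi> z)" if "z \<in> space (PI K \<Otimes>\<^sub>M lborel)" "z \<notin> Z'" for z
    using Z(1)[of "\<Phi> z"] that \<Phi>m[THEN measurable_space] by (auto simp: Z'_def)

  define h where "h q t = g (gmul N m c (q(j := 0)) (exp_coord N j t))" for q t
  have h\<Phi>: "case_prod h = (\<lambda>z. g (\<Phi> z))" by (auto simp: h_def \<Phi>_def)
  have hint: "integrable (PI K \<Otimes>\<^sub>M lborel) (case_prod h)"
    unfolding h\<Phi> using integrable_distr_eq[OF \<Phi>m gm] \<Phi>pres gint by simp
  have hintegral: "integral\<^sup>L (PI K \<Otimes>\<^sub>M lborel) (case_prod h) = (\<integral>x. g x \<partial>PM N)"
    unfolding h\<Phi> using integral_distr[OF \<Phi>m gm] \<Phi>pres by simp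

  have AEZ: "AE z in PI K \<Otimes>\<^sub>M lborel. z \<notin> Z'" by (rule AE_not_in[OF Z'n])
  have AE1: "AE q in PI K. AE t in lborel. (q, t) \<notin> Z'" using P.AE_pair[OF AEZ] by simp
  have AE2: "AE t in lborel. AE q in PI K. (q, t) \<notin> Z'"
  proof -
    have "{x \<in> space (PI K \<Otimes>\<^sub>M lborel). (fst x, snd x) \<notin> Z'} \<in> sets (PI K \<Otimes>\<^sub>M lborel)"
    proof -
      have "{x \<in> space (PI K \<Otimes>\<^sub>M lborel). (fst x, snd x) \<notin> Z'} = space (PI K \<Otimes>\<^sub>M lborel) - Z'" by auto
      then show ?thesis using sets.compl_sets[OF Z's] by (simp only:)
    qed
    from P.AE_commute[of "\<lambda>q t. (q, t) \<notin> Z'", OF this] show ?thesis using AE1 by simp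
  qed

  have sliceq: "AE q in PI K. integrable lebesgue (\<lambda>t. f (gmul N m c (q(j := 0)) (exp_coord N j t)))
        \<and> (\<integral>t. f (gmul N m c (q(j := 0)) (exp_coord N j t)) \<partial>lebesgue) = (\<integral>t. h q t \<partial>lborel)"
    using AE1 P.AE_integrable_fst[OF hint] AE_space
  proof eventually_elim
    case (elim q)
    have hm: "h q \<in> borel_measurable lborel" using borel_measurable_integrable[OF elim(2)] .
    have ae: "AE t in lborel. f (gmul N m c (q(j := 0)) (exp_coord N j t)) = h q t"
      using elim(1)
    proof eventually_elim
      case (elim t)
      then show ?case using fgZ[of "(q, t)"] \<open>q \<in> space (PI K)\<close> by (simp add: \<Phi>_def h_def space_pair_measure)
    qed
    show ?case using compl_AE_integrable[OF hm ae] compl_AE_integral[OF hm ae] elim(2) by simp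
  qed

  define \<Psi> where "\<Psi> p = (\<integral>t. g (gmul N m c p (exp_coord N j t)) \<partial>lborel)" for p
  have \<Psi>m: "\<Psi> \<in> borel_measurable R"
  proof -
    have "(\<lambda>z. gmul N m c (fst z) (exp_coord N j (snd z))) \<in> measurable (R \<Otimes>\<^sub>M lborel) (PM N)"
      by (rule meas_gmulP) (simp_all add: exp_coord_apply)
    then have "case_prod (\<lambda>p t. g (gmul N m c p (exp_coord N j t))) \<in> borel_measurable (R \<Otimes>\<^sub>M lborel)"
      by (simp add: case_prod_beta')
    then show ?thesis unfolding \<Psi>_def by (rule lborel.borel_measurable_lebesgue_integral)
  qed

  have p1D: "AE p in D. integrable lebesgue (\<lambda>t. f (gmul N m c p (exp_coord N j t)))
        \<and> (\<integral>t. f (gmul N m c p (exp_coord N j t)) \<partial>lebesgue) = \<Psi> p"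
    by (rule planeAE) (use sliceq in \<open>simp add: \<Psi>_def h_def\<close>)
  have part1: "AE p in H_Pi \<Theta>P N j. integrable lebesgue (\<lambda>t. f (gmul N m c p (exp_coord N j t)))"
  proof -
    have "AE p in completion D. integrable lebesgue (\<lambda>t. f (gmul N m c p (exp_coord N j t)))"
      by (rule AE_completion) (use p1D in \<open>auto elim: eventually_mono\<close>)
    then show ?thesis unfolding HPi by (subst AE_density) (auto elim: eventually_mono)
  qed
  have p1ae: "AE p in D. (\<integral>t. f (gmul N m c p (exp_coord N j t)) \<partial>lebesgue) = \<Psi> p"
    using p1D by (auto elim: eventually_mono)
  have \<Psi>int: "integrable D \<Psi>"
  proof -
    have "integrable (PI K) (\<lambda>q. \<integral>t. h q t \<partial>lborel)" by (rule P.integrable_fst[OF hint])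
    then have "integrable (PI K) (\<lambda>q. \<Psi> (q(j := 0)))" by (simp add: \<Psi>_def h_def)
    then show ?thesis unfolding D_def using integrable_distr_eq[OF iota \<Psi>m] by simp
  qed
  have \<Psi>integral: "integral\<^sup>L D \<Psi> = integral\<^sup>L (PI K \<Otimes>\<^sub>M lborel) (case_prod h)"
  proof -
    have "integral\<^sup>L D \<Psi> = (\<integral>q. \<Psi> (q(j := 0)) \<partial>PI K)" unfolding D_def by (rule integral_distr[OF iota \<Psi>m])
    also have "\<dots> = (\<integral>q. (\<integral>t. h q t \<partial>lborel) \<partial>PI K)" by (simp add: \<Psi>_def h_def)
    also have "\<dots> = integral\<^sup>L (PI K \<Otimes>\<^sub>M lborel) (case_prod h)" by (rule P.integral_fst[OF hint])
    finally show ?thesis .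
  qed
  have I1m: "(\<lambda>p. \<integral>t. f (gmul N m c p (exp_coord N j t)) \<partial>lebesgue) \<in> borel_measurable (completion D)"
    by (rule compl_AE_meas[OF _ p1ae]) (use \<Psi>m in \<open>simp add: D_def\<close>)
  have \<Psi>mD: "\<Psi> \<in> borel_measurable D" using \<Psi>m by (simp add: D_def)
  have part3: "integrable (H_Pi \<Theta>P N j) (\<lambda>p. \<integral>t. f (gmul N m c p (exp_coord N j t)) \<partial>lebesgue)"
    unfolding HPi dens_const(1)[OF \<Theta>P I1m] compl_AE_integrable[OF \<Psi>mD p1ae] by (rule \<Psi>int)
  have val3: "(\<integral>p. (\<integral>t. f (gmul N m c p (exp_coord N j t)) \<partial>lebesgue) \<partial>H_Pi \<Theta>P N j)
      = \<Theta>P * integral\<^sup>L (PI K \<Otimes>\<^sub>M lborel) (case_prod h)"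
    unfolding HPi dens_const(2)[OF \<Theta>P I1m] compl_AE_integral[OF \<Psi>mD p1ae] \<Psi>integral ..

  have slicet: "AE t in lborel. integrable (H_Pi \<Theta>P N j) (\<lambda>p. f (gmul N m c p (exp_coord N j t)))
      \<and> (\<integral>p. f (gmul N m c p (exp_coord N j t)) \<partial>H_Pi \<Theta>P N j) = \<Theta>P * (\<integral>q. h q t \<partial>PI K)"
    using AE2 P.AE_integrable_snd[OF hint]
  proof eventually_elim
    case (elim t)
    define \<psi> where "\<psi> p = g (gmul N m c p (exp_coord N j t))" for p
    have \<psi>m: "\<psi> \<in> borel_measurable R"
    proof -
      have "(\<lambda>p. gmul N m c p (exp_coord N j t)) \<in> measurable R (PM N)"
        by (rule meas_gmulP) simp_all
      then show ?thesis unfolding \<psi>_def by simp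
    qed
    then have \<psi>mD: "\<psi> \<in> borel_measurable D" by (simp add: D_def)
    have aeq: "AE q in PI K. f (gmul N m c (q(j := 0)) (exp_coord N j t)) = \<psi> (q(j := 0))"
      using elim(1) AE_space
    proof eventually_elim
      case (elim q)
      then show ?case using fgZ[of "(q, t)"] by (simp add: \<Phi>_def \<psi>_def space_pair_measure)
    qed
    have ae: "AE p in D. f (gmul N m c p (exp_coord N j t)) = \<psi> p" by (rule planeAE[OF aeq])
    have fm: "(\<lambda>p. f (gmul N m c p (exp_coord N j t))) \<in> borel_measurable (completion D)"
      by (rule compl_AE_meas[OF \<psi>mD ae])
    have "integrable D \<psi>"
    proof -
      have "integrable (PI K) (\<lambda>q. \<psi> (q(j := 0)))" using elim(2) by (simp add: \<psi>_def h_def)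
      then show ?thesis unfolding D_def using integrable_distr_eq[OF iota \<psi>m] by simp
    qed
    moreover have "integral\<^sup>L D \<psi> = (\<integral>q. h q t \<partial>PI K)"
      unfolding D_def integral_distr[OF iota \<psi>m] by (simp add: \<psi>_def h_def)
    ultimately show ?case
      unfolding HPi dens_const(1)[OF \<Theta>P fm] dens_const(2)[OF \<Theta>P fm]
        compl_AE_integrable[OF \<psi>mD ae] compl_AE_integral[OF \<psi>mD ae] by simp
  qed
  have part2: "AE t in lebesgue. integrable (H_Pi \<Theta>P N j) (\<lambda>p. f (gmul N m c p (exp_coord N j t)))"
    by (rule AE_completion) (use slicet in \<open>auto elim: eventually_mono\<close>)
  have t2ae: "AE t in lborel. (\<integral>p. f (gmul N m c p (exp_coord N j t)) \<partial>H_Pi \<Theta>P N j) = \<Theta>P * (\<integral>q. h q t \<partial>PI K)"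
    using slicet by (auto elim: eventually_mono)
  have \<Lambda>int: "integrable lborel (\<lambda>t. \<integral>q. h q t \<partial>PI K)" by (rule P.integrable_snd[OF hint])
  have \<Lambda>m: "(\<lambda>t. \<Theta>P * (\<integral>q. h q t \<partial>PI K)) \<in> borel_measurable lborel"
    using borel_measurable_integrable[OF \<Lambda>int] by simp
  have part4: "integrable lebesgue (\<lambda>t. \<integral>p. f (gmul N m c p (exp_coord N j t)) \<partial>H_Pi \<Theta>P N j)"
    unfolding compl_AE_integrable[OF \<Lambda>m t2ae] using \<Lambda>int by simp
  have val4: "(\<integral>t. (\<integral>p. f (gmul N m c p (exp_coord N j t)) \<partial>H_Pi \<Theta>P N j) \<partial>lebesgue)
      = \<Theta>P * integral\<^sup>L (PI K \<Otimes>\<^sub>M lborel) (case_prod h)"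
    unfolding compl_AE_integral[OF \<Lambda>m t2ae] integral_mult_right_zero P.integral_snd[OF hint] ..

  have val5: "\<Theta>P / \<Theta>G * (\<integral>x. f x \<partial>H_G \<Theta>G N) = \<Theta>P * integral\<^sup>L (PI K \<Otimes>\<^sub>M lborel) (case_prod h)"
    unfolding fintG fgint hintegral using \<Theta>G by simp
  show ?thesis using part1 part2 part3 part4 val3 val4 val5 by simp
qed

end
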